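(* Under the setting and assumptions in the context, if $\Pr(Y(0)=1)>0$, then $$APCE_{AH}=\frac{\Pr(R=0,Y=1\mid Z=0)-\Pr(R=0,Y=1\mid Z=1)}{\Pr(Y(0)=1)}.$$
   Context: Units are drawn from a population (a probability space). Each unit has a binary assignment $Z\in\{0,1\}$ with $0<\Pr(Z=1)<1$, binary potential recommendations $R(0),R(1)\in\{0,1\}$, and binary potential outcomes $Y(0),Y(1)\in\{0,1\}$ indexed by the recommendation only (exclusion restriction). Observed quantities are $R=R(Z)$ and $Y=Y(R(Z))$. Assumptions: (Randomization) $Z$ is independent of $(R(0),R(1),Y(0),Y(1))$; (Monotonicity) $Y(1)\ge Y(0)$ almost surely. Principal strata: Always Low $AL=\{Y(0)=Y(1)=0\}$, Always High $AH=\{Y(0)=Y(1)=1\}$, Helpable $H=\{Y(0)=0,Y(1)=1\}$. For a stratum $J$ with positive probability, $APCE_J=E[R(1)-R(0)\mid J]$. *)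

theory Defs
  imports "HOL-Probability.Probability"
begin

text \<open>Binary variables are modelled as boolean-valued random variables (True = 1).
  Elementary conditional probability of event A given event B (with Pr(B) > 0):\<close>

definition cond_prob :: "'a measure \<Rightarrow> 'a set \<Rightarrow> 'a set \<Rightarrow> real" where
  "cond_prob M A B = measure M (A \<inter> B) / measure M B"

text \<open>Principal causal effect on a stratum J (an event):
  APCE_J = E[R(1) - R(0) | J] = E[(R(1) - R(0)) 1_J] / Pr(J).\<close>

definition APCE :: "'a measure \<Rightarrow> ('a \<Rightarrow> bool) \<Rightarrow> ('a \<Rightarrow> bool) \<Rightarrow> 'a set \<Rightarrow> real" where
  "APCE M R0 R1 J =
     (\<integral>\<omega>. indicator J \<omega> * ((if R1 \<omega> then 1 else 0) - (if R0 \<omega> then 1 else 0)) \<partial>M)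
     / measure M J"

text \<open>Independence of two random variables with possibly different codomains
  (same formula as the library lemma prob_space.indep_var_eq, which requires equal codomain types).\<close>
definition indep_rv :: "'a measure \<Rightarrow> 'b measure \<Rightarrow> ('a \<Rightarrow> 'b) \<Rightarrow> 'c measure \<Rightarrow> ('a \<Rightarrow> 'c) \<Rightarrow> bool" where
  "indep_rv M S X T Y \<longleftrightarrow>
    X \<in> M \<rightarrow>\<^sub>M S \<and> Y \<in> M \<rightarrow>\<^sub>M T \<and>
    prob_space.indep_set M
      (sigma_sets (space M) { X -` A \<inter> space M | A. A \<in> sets S})
      (sigma_sets (space M) { Y -` A \<inter> space M | A. A \<in> sets T})"

definition AH_stratum :: "'a measure \<Rightarrow> ('a \<Rightarrow> bool) \<Rightarrow> ('a \<Rightarrow> bool) \<Rightarrow> 'a set" where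
  "AH_stratum M Y0 Y1 = {\<omega> \<in> space M. Y0 \<omega> \<and> Y1 \<omega>}"

end

theory Submission
  imports Defs
begin

theorem mainTheorem3:
  fixes M :: "'a measure"
    and Z R0 R1 Y0 Y1 :: "'a \<Rightarrow> bool"
  assumes P: "prob_space M"
    and meas_Z: "Z \<in> M \<rightarrow>\<^sub>M count_space UNIV"
    and meas_R0: "R0 \<in> M \<rightarrow>\<^sub>M count_space UNIV"
    and meas_R1: "R1 \<in> M \<rightarrow>\<^sub>M count_space UNIV"
    and meas_Y0: "Y0 \<in> M \<rightarrow>\<^sub>M count_space UNIV"
    and meas_Y1: "Y1 \<in> M \<rightarrow>\<^sub>M count_space UNIV"
    and Z_pos: "0 < measure M {\<omega> \<in> space M. Z \<omega>}"
    and Z_lt1: "measure M {\<omega> \<in> space M. Z \<omega>} < 1"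
    and randomization: "indep_rv M (count_space UNIV) Z (count_space (UNIV :: (bool \<times> bool \<times> bool \<times> bool) set))
                          (\<lambda>\<omega>. (R0 \<omega>, R1 \<omega>, Y0 \<omega>, Y1 \<omega>))"
    and monotonicity: "AE \<omega> in M. Y0 \<omega> \<longrightarrow> Y1 \<omega>"
    and Y0_pos: "0 < measure M {\<omega> \<in> space M. Y0 \<omega>}"
  shows "APCE M R0 R1 (AH_stratum M Y0 Y1) =
           (cond_prob M {\<omega> \<in> space M. \<not> (if Z \<omega> then R1 \<omega> else R0 \<omega>) \<and>
                                      (if (if Z \<omega> then R1 \<omega> else R0 \<omega>) then Y1 \<omega> else Y0 \<omega>)}
                        {\<omega> \<in> space M. \<not> Z \<omega>}
          - cond_prob M {\<omega> \<in> space M. \<not> (if Z \<omega> then R1 \<omega> else R0 \<omega>) \<and>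
                                      (if (if Z \<omega> then R1 \<omega> else R0 \<omega>) then Y1 \<omega> else Y0 \<omega>)}
                        {\<omega> \<in> space M. Z \<omega>})
          / measure M {\<omega> \<in> space M. Y0 \<omega>}"
proof -
  interpret prob_space M by (rule P)
  let ?f = "\<lambda>\<omega>. (R0 \<omega>, R1 \<omega>, Y0 \<omega>, Y1 \<omega>)"
  have ind: "indep_set (sigma_sets (space M) { Z -` A \<inter> space M | A. A \<in> sets (count_space UNIV)})
      (sigma_sets (space M) { ?f -` A \<inter> space M | A. A \<in> sets (count_space (UNIV :: (bool \<times> bool \<times> bool \<times> bool) set))})"
    using randomization unfolding indep_rv_def by blast
  have key: "prob (Z -` {b} \<inter> space M \<inter> (?f -` S \<inter> space M)) = prob (Z -` {b} \<inter> space M) * prob (?f -` S \<inter> space M)" for b S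
    by (rule indep_setD[OF ind]) (auto intro!: sigma_sets.Basic)
  have evR0: "{\<omega> \<in> space M. R0 \<omega>} \<in> events" using meas_R0 by measurable
  have evR1: "{\<omega> \<in> space M. R1 \<omega>} \<in> events" using meas_R1 by measurable
  have evY0: "{\<omega> \<in> space M. Y0 \<omega>} \<in> events" using meas_Y0 by measurable
  have evY1: "{\<omega> \<in> space M. Y1 \<omega>} \<in> events" using meas_Y1 by measurable
  have evZ: "{\<omega> \<in> space M. Z \<omega>} \<in> events" using meas_Z by measurable
  define B0 where "B0 = {\<omega> \<in> space M. \<not> R0 \<omega> \<and> Y0 \<omega>}"
  define B1 where "B1 = {\<omega> \<in> space M. \<not> R1 \<omega> \<and> Y0 \<omega>}"
  have e1: "{\<omega> \<in> space M. \<not> (if Z \<omega> then R1 \<omega> else R0 \<omega>) \<and>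
                                      (if (if Z \<omega> then R1 \<omega> else R0 \<omega>) then Y1 \<omega> else Y0 \<omega>)}
            \<inter> {\<omega> \<in> space M. \<not> Z \<omega>} = Z -` {False} \<inter> space M \<inter> (?f -` {(r0,r1,y0,y1). \<not> r0 \<and> y0} \<inter> space M)"
    by auto
  have e2: "{\<omega> \<in> space M. \<not> (if Z \<omega> then R1 \<omega> else R0 \<omega>) \<and>
                                      (if (if Z \<omega> then R1 \<omega> else R0 \<omega>) then Y1 \<omega> else Y0 \<omega>)}
            \<inter> {\<omega> \<in> space M. Z \<omega>} = Z -` {True} \<inter> space M \<inter> (?f -` {(r0,r1,y0,y1). \<not> r1 \<and> y0} \<inter> space M)"
    by auto
  have zT: "Z -` {True} \<inter> space M = {\<omega> \<in> space M. Z \<omega>}" by auto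
  have zF: "Z -` {False} \<inter> space M = space M - {\<omega> \<in> space M. Z \<omega>}" by auto
  have pF: "prob (space M - {\<omega> \<in> space M. Z \<omega>}) = 1 - prob {\<omega> \<in> space M. Z \<omega>}"
    using prob_compl[OF evZ] by simp
  have b0: "?f -` {(r0,r1,y0,y1). \<not> r0 \<and> y0} \<inter> space M = B0" unfolding B0_def by auto
  have b1: "?f -` {(r0,r1,y0,y1). \<not> r1 \<and> y0} \<inter> space M = B1" unfolding B1_def by auto
  have c1: "cond_prob M {\<omega> \<in> space M. \<not> (if Z \<omega> then R1 \<omega> else R0 \<omega>) \<and>
                                      (if (if Z \<omega> then R1 \<omega> else R0 \<omega>) then Y1 \<omega> else Y0 \<omega>)}
                        {\<omega> \<in> space M. \<not> Z \<omega>} = prob B0"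
  proof -
    have zF': "Z -` {False} \<inter> space M = {\<omega> \<in> space M. \<not> Z \<omega>}" by auto
    have pos: "prob {\<omega> \<in> space M. \<not> Z \<omega>} > 0"
      using pF Z_lt1 zF zF' by simp
    show ?thesis
      using key[of False "{(r0,r1,y0,y1). \<not> r0 \<and> y0}", unfolded zF' b0] pos
      unfolding cond_prob_def e1 zF' b0 by simp
  qed
  have c2: "cond_prob M {\<omega> \<in> space M. \<not> (if Z \<omega> then R1 \<omega> else R0 \<omega>) \<and>
                                      (if (if Z \<omega> then R1 \<omega> else R0 \<omega>) then Y1 \<omega> else Y0 \<omega>)}
                        {\<omega> \<in> space M. Z \<omega>} = prob B1"
    using key[of True "{(r0,r1,y0,y1). \<not> r1 \<and> y0}", unfolded zT b1] Z_pos
    unfolding cond_prob_def e2 zT b1 by simp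
  define AH where "AH = AH_stratum M Y0 Y1"
  have evAH: "AH \<in> events" unfolding AH_def AH_stratum_def using meas_Y0 meas_Y1 by measurable
  have AHeq: "AE \<omega> in M. (\<omega> \<in> AH) = (\<omega> \<in> {\<omega> \<in> space M. Y0 \<omega>})"
    using monotonicity by eventually_elim (auto simp: AH_def AH_stratum_def)
  have int: "(\<integral>\<omega>. indicator AH \<omega> * ((if R1 \<omega> then 1 else 0) - (if R0 \<omega> then 1 else 0)::real) \<partial>M)
     = (\<integral>\<omega>. indicator (AH \<inter> {\<omega> \<in> space M. R1 \<omega>}) \<omega> - indicator (AH \<inter> {\<omega> \<in> space M. R0 \<omega>}) \<omega> \<partial>M)"
    by (rule Bochner_Integration.integral_cong) (auto simp: indicator_def AH_def AH_stratum_def)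
  also have "\<dots> = prob (AH \<inter> {\<omega> \<in> space M. R1 \<omega>}) - prob (AH \<inter> {\<omega> \<in> space M. R0 \<omega>})"
  proof -
    have "AH \<inter> {\<omega> \<in> space M. R1 \<omega>} \<in> events" "AH \<inter> {\<omega> \<in> space M. R0 \<omega>} \<in> events"
      using evAH evR0 evR1 by auto
    then have "integrable M (indicator (AH \<inter> {\<omega> \<in> space M. R1 \<omega>}) :: 'a \<Rightarrow> real)"
       "integrable M (indicator (AH \<inter> {\<omega> \<in> space M. R0 \<omega>}) :: 'a \<Rightarrow> real)"
      by (auto intro!: integrable_real_indicator simp: emeasure_eq_measure)
    moreover have "AH \<inter> {\<omega> \<in> space M. R1 \<omega>} \<inter> space M = AH \<inter> {\<omega> \<in> space M. R1 \<omega>}" by blast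
    moreover have "AH \<inter> {\<omega> \<in> space M. R0 \<omega>} \<inter> space M = AH \<inter> {\<omega> \<in> space M. R0 \<omega>}" by blast
    ultimately show ?thesis by (subst Bochner_Integration.integral_diff) simp_all
  qed
  also have "prob (AH \<inter> {\<omega> \<in> space M. R1 \<omega>}) = prob {\<omega> \<in> space M. Y0 \<omega> \<and> R1 \<omega>}"
  proof (rule measure_eq_AE)
    show "AE x in M. (x \<in> AH \<inter> {\<omega> \<in> space M. R1 \<omega>}) = (x \<in> {\<omega> \<in> space M. Y0 \<omega> \<and> R1 \<omega>})"
      using AHeq by eventually_elim blast
    show "AH \<inter> {\<omega> \<in> space M. R1 \<omega>} \<in> events" using evAH evR1 by blast
    have "{\<omega> \<in> space M. Y0 \<omega> \<and> R1 \<omega>} = {\<omega> \<in> space M. Y0 \<omega>} \<inter> {\<omega> \<in> space M. R1 \<omega>}" by blast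
    then show "{\<omega> \<in> space M. Y0 \<omega> \<and> R1 \<omega>} \<in> events" using evY0 evR1 by simp
  qed
  also have "prob (AH \<inter> {\<omega> \<in> space M. R0 \<omega>}) = prob {\<omega> \<in> space M. Y0 \<omega> \<and> R0 \<omega>}"
  proof (rule measure_eq_AE)
    show "AE x in M. (x \<in> AH \<inter> {\<omega> \<in> space M. R0 \<omega>}) = (x \<in> {\<omega> \<in> space M. Y0 \<omega> \<and> R0 \<omega>})"
      using AHeq by eventually_elim blast
    show "AH \<inter> {\<omega> \<in> space M. R0 \<omega>} \<in> events" using evAH evR0 by blast
    have "{\<omega> \<in> space M. Y0 \<omega> \<and> R0 \<omega>} = {\<omega> \<in> space M. Y0 \<omega>} \<inter> {\<omega> \<in> space M. R0 \<omega>}" by blast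
    then show "{\<omega> \<in> space M. Y0 \<omega> \<and> R0 \<omega>} \<in> events" using evY0 evR0 by simp
  qed
  finally have num: "(\<integral>\<omega>. indicator AH \<omega> * ((if R1 \<omega> then 1 else 0) - (if R0 \<omega> then 1 else 0)::real) \<partial>M)
     = prob {\<omega> \<in> space M. Y0 \<omega> \<and> R1 \<omega>} - prob {\<omega> \<in> space M. Y0 \<omega> \<and> R0 \<omega>}" .
  have den: "prob AH = prob {\<omega> \<in> space M. Y0 \<omega>}"
    using AHeq evAH evY0 by (rule measure_eq_AE)
  have split: "prob {\<omega> \<in> space M. Y0 \<omega>} = prob {\<omega> \<in> space M. Y0 \<omega> \<and> R \<omega>} + prob {\<omega> \<in> space M. \<not> R \<omega> \<and> Y0 \<omega>}"
    if "{\<omega> \<in> space M. R \<omega>} \<in> events" for R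
  proof -
    have u: "{\<omega> \<in> space M. Y0 \<omega>} = {\<omega> \<in> space M. Y0 \<omega> \<and> R \<omega>} \<union> {\<omega> \<in> space M. \<not> R \<omega> \<and> Y0 \<omega>}" by auto
    have a: "{\<omega> \<in> space M. Y0 \<omega> \<and> R \<omega>} \<in> events"
    proof -
      have "{\<omega> \<in> space M. Y0 \<omega> \<and> R \<omega>} = {\<omega> \<in> space M. Y0 \<omega>} \<inter> {\<omega> \<in> space M. R \<omega>}" by auto
      then show ?thesis using that evY0 by simp
    qed
    have b: "{\<omega> \<in> space M. \<not> R \<omega> \<and> Y0 \<omega>} \<in> events"
    proof -
      have "{\<omega> \<in> space M. \<not> R \<omega> \<and> Y0 \<omega>} = {\<omega> \<in> space M. Y0 \<omega>} - {\<omega> \<in> space M. R \<omega>}" by auto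
      then show ?thesis using that evY0 by simp
    qed
    have d: "{\<omega> \<in> space M. Y0 \<omega> \<and> R \<omega>} \<inter> {\<omega> \<in> space M. \<not> R \<omega> \<and> Y0 \<omega>} = {}" by auto
    show ?thesis unfolding u[symmetric] using finite_measure_Union[OF a b d] u by simp
  qed
  show ?thesis
    unfolding APCE_def AH_def[symmetric] num den c1 c2 B0_def B1_def
    using split[OF evR0] split[OF evR1] by simp
qed

end
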